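(* Let $A,B_1,\ldots,B_m\in\mathbb{C}^{d\times d}$, let $\{\xi_{n,k}: n\ge 1,\ 1\le k\le m\}$ be independent real-valued random variables with $\mathbb{E}\xi_{n,k}=0$ and $\mathbb{E}\xi_{n,k}^2=1$, and let $\mathbf{u},\mathbf{v}\in\mathbb{C}^d$ be non-random. Define $\mathbb{C}^d$-valued random sequences by \[ \mathbf{x}(n+1)=A\mathbf{x}(n)+\sum_{k=1}^m B_k\mathbf{x}(n)\xi_{n+1,k},\ \mathbf{x}(0)=\mathbf{u};\qquad \mathbf{y}(n+1)=A\mathbf{y}(n)+\sum_{k=1}^m B_k\mathbf{y}(n)\xi_{n+1,k},\ \mathbf{y}(0)=\mathbf{v}. \] Let $V(n)=\mathbb{E}\,\mathbf{x}(n)\mathbf{y}^*(n)$, $\mathbf{U}(n)=\mathrm{vec}(V(n))$ and $r_x(n)=\mathbb{E}|\mathbf{x}(n)|^2$. Then \[ \mathbf{U}(n)=D_{A,B}^n\,\mathbf{U}(0),\qquad D_{A,B}=\overline{A}\otimes A+\sum_{k=1}^m\overline{B}_k\otimes B_k, \] and \[ |\mathbf{u}|^2\gamma^n\le r_x(n)\le |\mathbf{u}|^2\beta^n \quad\text{for all } n\ge 0, \] where $\gamma$ and $\beta$ are the smallest and largest eigenvalues of the non-negative Hermitian matrix $N_{A,B}=A^*A+\sum_{k=1}^m B_k^*B_k$.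
   Context: For $X\in\mathbb{C}^{d\times d}$, $\mathrm{vec}(X)\in\mathbb{C}^{d^2}$ is the column vector obtained by stacking the columns of $X$ left to right: $(X_{11},\ldots,X_{d1},X_{12},\ldots,X_{d2},\ldots,X_{1d},\ldots,X_{dd})^\top$. $\overline{X}$ is entrywise conjugate, $X^*$ conjugate transpose, $\otimes$ the Kronecker product, $|\cdot|$ the Euclidean norm. *)

theory Defs
  imports "HOL-Analysis.Analysis" "HOL-Probability.Probability"
begin

(* Entrywise complex conjugate of a matrix:  \<overline>X *)
definition cmat_conj :: "complex^'n^'m \<Rightarrow> complex^'n^'m" where
  "cmat_conj X = (\<chi> i j. cnj (X $ i $ j))"

(* Conjugate transpose X^* *)
definition cmat_adj :: "complex^'n^'m \<Rightarrow> complex^'m^'n" where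
  "cmat_adj X = (\<chi> i j. cnj (X $ j $ i))"

(* vec: column stacking.  C^{d^2} is indexed by pairs (p,q) ordered as
   position (p-1)d+q, i.e. p = column (block) index, q = row index:
   vec(X) at (p,q) is X_{q p}. *)
definition cvec :: "complex^'d^'d \<Rightarrow> complex^('d \<times> 'd)" where
  "cvec X = (\<chi> pq. X $ snd pq $ fst pq)"

(* Kronecker product with the same index convention:
   (P \<otimes> Q) at row (a,b), column (c,e) equals P_{ac} Q_{be}. *)
definition kron :: "complex^'d^'d \<Rightarrow> complex^'d^'d \<Rightarrow> complex^('d \<times> 'd)^('d \<times> 'd)" where
  "kron P Q = (\<chi> ab ce. P $ fst ab $ fst ce * Q $ snd ab $ snd ce)"

(* The random recursion x(n+1) = A x(n) + \<Sum>_{k=1}^m B_k x(n) \<xi>_{n+1,k}, x(0) = u *)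
primrec traj :: "complex^'d^'d \<Rightarrow> (nat \<Rightarrow> complex^'d^'d) \<Rightarrow> nat \<Rightarrow>
    (nat \<Rightarrow> nat \<Rightarrow> 'a \<Rightarrow> real) \<Rightarrow> complex^'d \<Rightarrow> nat \<Rightarrow> 'a \<Rightarrow> complex^'d" where
  "traj A B m \<xi> u 0 \<omega> = u"
| "traj A B m \<xi> u (Suc n) \<omega> =
     A *v traj A B m \<xi> u n \<omega>
     + (\<Sum>k\<in>{1..m}. complex_of_real (\<xi> (Suc n) k \<omega>) *s (B k *v traj A B m \<xi> u n \<omega>))"

(* V(n) = E x(n) y(n)^*  (entrywise expectation) *)
definition covmat :: "'a measure \<Rightarrow> ('a \<Rightarrow> complex^'d) \<Rightarrow> ('a \<Rightarrow> complex^'d) \<Rightarrow> complex^'d^'d" where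
  "covmat M x y = (\<chi> i j. integral\<^sup>L M (\<lambda>\<omega>. x \<omega> $ i * cnj (y \<omega> $ j)))"

(* real eigenvalues of a complex square matrix *)
definition real_eigenvalues :: "complex^'d^'d \<Rightarrow> real set" where
  "real_eigenvalues N = {e. \<exists>x. x \<noteq> 0 \<and> N *v x = complex_of_real e *s x}"

end

theory Submission
  imports Defs
begin

definition cinner :: "complex^'d \<Rightarrow> complex^'d \<Rightarrow> complex" where
  "cinner x y = (\<Sum>i\<in>UNIV. cnj (x$i) * y$i)"

lemma cinner_add_left: "cinner (x + y) z = cinner x z + cinner y z"
  by (simp add: cinner_def distrib_right sum.distrib)
lemma cinner_add_right: "cinner z (x + y) = cinner z x + cinner z y"
  by (simp add: cinner_def distrib_left sum.distrib)
lemma cinner_diff_right: "cinner z (x - y) = cinner z x - cinner z y"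
  by (simp add: cinner_def right_diff_distrib sum_subtractf)
lemma cinner_scale_left: "cinner (c *s x) z = cnj c * cinner x z"
  by (simp add: cinner_def sum_distrib_left mult.assoc)
lemma cinner_scale_right: "cinner z (c *s x) = c * cinner z x"
  by (simp add: cinner_def sum_distrib_left mult.left_commute)
lemma cinner_sym: "cinner y x = cnj (cinner x y)"
  by (simp add: cinner_def mult.commute)
lemma cinner_zero_right[simp]: "cinner z 0 = 0"
  by (simp add: cinner_def)
lemma cinner_sum_right: "cinner z (\<Sum>k\<in>S. f k) = (\<Sum>k\<in>S. cinner z (f k))"
  by (induction S rule: infinite_finite_induct) (auto simp: cinner_add_right)

lemma norm_sq_vec: "(norm (x::complex^'d))\<^sup>2 = (\<Sum>i\<in>UNIV. (norm (x$i))\<^sup>2)"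
  by (simp add: power2_norm_eq_inner inner_vec_def)

lemma cinner_self: "cinner x x = of_real ((norm x)\<^sup>2)"
  unfolding norm_sq_vec cinner_def of_real_sum complex_norm_square
  by (simp add: mult.commute)

lemma cinner_adj: "cinner x (cmat_adj P *v y) = cinner (P *v x) y"
proof -
  have "cinner x (cmat_adj P *v y) = (\<Sum>i\<in>UNIV. \<Sum>j\<in>UNIV. cnj (x$i) * (cnj (P$j$i) * y$j))"
    unfolding cinner_def cmat_adj_def matrix_vector_mult_def by (simp add: sum_distrib_left)
  also have "\<dots> = (\<Sum>j\<in>UNIV. \<Sum>i\<in>UNIV. cnj (P$j$i * x$i) * y$j)"
    by (subst sum.swap) (simp add: mult_ac)
  also have "\<dots> = cinner (P *v x) y"
    unfolding cinner_def matrix_vector_mult_def by (simp add: sum_distrib_right)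
  finally show ?thesis .
qed

lemma mv_scale: "P *v (c *s x) = c *s (P *v (x::complex^'d))"
  by (simp add: vec_eq_iff matrix_vector_mult_def sum_distrib_left mult.left_commute)

lemma mv_scaleR: "P *v (c *\<^sub>R x) = c *\<^sub>R (P *v (x::complex^'d))"
  by (simp add: vec_eq_iff matrix_vector_mult_def scaleR_sum_right)

lemma mv_sum: "(\<Sum>k\<in>S. P k) *v (x::complex^'d) = (\<Sum>k\<in>S. P k *v x)"
  by (induction S rule: infinite_finite_induct) (auto simp: matrix_vector_mult_add_rdistrib)

lemma inner_cinner: "inner x y = Re (cinner x (y::complex^'d))"
  by (simp add: inner_vec_def cinner_def inner_complex_def Re_sum)

lemma scaleR_smult: "c *\<^sub>R (x::complex^'d) = of_real c *s x"
  by (simp add: vec_eq_iff) (simp add: scaleR_conv_of_real)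

lemma bl_mv: "bounded_linear (\<lambda>x::complex^'d. P *v x)"
  by (rule linear_conv_bounded_linear[THEN iffD1])
     (simp add: linear_iff matrix_vector_right_distrib mv_scaleR)

definition Nm :: "complex^'d^'d \<Rightarrow> (nat \<Rightarrow> complex^'d^'d) \<Rightarrow> nat \<Rightarrow> complex^'d^'d" where
  "Nm A B m = cmat_adj A ** A + (\<Sum>k\<in>{1..m}. cmat_adj (B k) ** B k)"
definition Hf :: "complex^'d^'d \<Rightarrow> (nat \<Rightarrow> complex^'d^'d) \<Rightarrow> nat \<Rightarrow> complex^'d \<Rightarrow> complex^'d \<Rightarrow> complex" where
  "Hf A B m x y = cinner (A *v x) (A *v y) + (\<Sum>k\<in>{1..m}. cinner (B k *v x) (B k *v y))"
definition Qf :: "complex^'d^'d \<Rightarrow> (nat \<Rightarrow> complex^'d^'d) \<Rightarrow> nat \<Rightarrow> complex^'d \<Rightarrow> real" where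
  "Qf A B m x = (norm (A *v x))\<^sup>2 + (\<Sum>k\<in>{1..m}. (norm (B k *v x))\<^sup>2)"

lemma N_cinner: "cinner y (Nm A B m *v x) = Hf A B m y x"
  unfolding Nm_def Hf_def
  by (simp add: matrix_vector_mult_add_rdistrib mv_sum matrix_vector_mul_assoc[symmetric]
        cinner_add_right cinner_sum_right cinner_adj)

lemma H_sym: "Hf A B m y x = cnj (Hf A B m x y)"
  unfolding Hf_def by (simp add: cinner_sym[of "A *v x"] cinner_sym[of "B _ *v x"])

lemma H_self: "Hf A B m x x = of_real (Qf A B m x)"
  unfolding Hf_def Qf_def by (simp add: cinner_self)

lemma Q_nonneg: "0 \<le> Qf A B m x"
  unfolding Qf_def by (simp add: sum_nonneg)

lemma Q_scaleR: "Qf A B m (c *\<^sub>R x) = c\<^sup>2 * Qf A B m x"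
  unfolding Qf_def by (simp add: mv_scaleR power_mult_distrib sum_distrib_left distrib_left)

lemma Q_cont: fixes A :: "complex^'d^'d" shows "continuous_on S (Qf A B m)"
proof -
  have c: "continuous_on S (\<lambda>x::complex^'d. P *v x)" for P :: "complex^'d^'d"
    by (rule linear_continuous_on[OF bl_mv])
  show ?thesis unfolding Qf_def
    by (intro continuous_intros c)
qed

lemma Q_expand:
  fixes A :: "complex^'d^'d" and x0 w :: "complex^'d"
  assumes x0: "Qf A B m x0 = \<mu> * (norm x0)\<^sup>2"
    and w: "w = Nm A B m *v x0 - of_real \<mu> *s x0"
  shows "Qf A B m (x0 + t *\<^sub>R w) - \<mu> * (norm (x0 + t *\<^sub>R w))\<^sup>2
           = 2 * t * (norm w)\<^sup>2 + t\<^sup>2 * (Qf A B m w - \<mu> * (norm w)\<^sup>2)"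
proof -
  let ?N = "Nm A B m"
  define c where "c = (of_real t :: complex)"
  define z where "z = x0 + t *\<^sub>R w"
  have zc: "z = x0 + c *s w" unfolding z_def c_def by (simp add: scaleR_smult)
  have cc: "cnj c = c" unfolding c_def by simp
  have e1: "cinner z (?N *v z) = cinner x0 (?N *v x0) + c * cinner x0 (?N *v w)
       + c * cinner w (?N *v x0) + c * c * cinner w (?N *v w)"
    unfolding zc by (simp add: matrix_vector_right_distrib mv_scale cinner_add_left cinner_add_right
        cinner_scale_left cinner_scale_right cc algebra_simps)
  have e2: "cinner z z = cinner x0 x0 + c * cinner x0 w + c * cinner w x0 + c * c * cinner w w"
    unfolding zc by (simp add: cinner_add_left cinner_add_right
        cinner_scale_left cinner_scale_right cc algebra_simps)
  have q: "of_real (Qf A B m y) = cinner y (?N *v y)" for y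
    by (simp add: N_cinner H_self)
  have f1: "cinner x0 (?N *v x0) = of_real \<mu> * cinner x0 x0"
    using x0 by (simp add: q[symmetric] cinner_self)
  have f2: "cinner w (?N *v x0) - of_real \<mu> * cinner w x0 = cinner w w"
    using w by (simp add: cinner_diff_right cinner_scale_right)
  have f3: "cinner x0 (?N *v w) - of_real \<mu> * cinner x0 w = cinner w w"
  proof -
    have "cinner x0 (?N *v w) = cnj (cinner w (?N *v x0))"
      by (simp add: N_cinner H_sym[of A B m x0 w])
    moreover have "cinner x0 w = cnj (cinner w x0)" by (rule cinner_sym)
    ultimately have "cinner x0 (?N *v w) - of_real \<mu> * cinner x0 w
        = cnj (cinner w (?N *v x0) - of_real \<mu> * cinner w x0)" by simp
    also have "\<dots> = cnj (cinner w w)" using f2 by simp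
    also have "\<dots> = cinner w w" by (simp add: cinner_self)
    finally show ?thesis .
  qed
  have "complex_of_real (Qf A B m z - \<mu> * (norm z)\<^sup>2) = cinner z (?N *v z) - of_real \<mu> * cinner z z"
    by (simp add: q cinner_self)
  also have "\<dots> = (cinner x0 (?N *v x0) - of_real \<mu> * cinner x0 x0)
      + c * (cinner x0 (?N *v w) - of_real \<mu> * cinner x0 w)
      + c * (cinner w (?N *v x0) - of_real \<mu> * cinner w x0)
      + c * c * (cinner w (?N *v w) - of_real \<mu> * cinner w w)"
    unfolding e1 e2 by (simp add: algebra_simps)
  also have "\<dots> = c * cinner w w + c * cinner w w + c * c * (cinner w (?N *v w) - of_real \<mu> * cinner w w)"
    using f1 f2 f3 by simp
  also have "\<dots> = complex_of_real (2 * t * (norm w)\<^sup>2 + t\<^sup>2 * (Qf A B m w - \<mu> * (norm w)\<^sup>2))"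
    unfolding c_def by (simp add: q[symmetric] cinner_self power2_eq_square algebra_simps)
  finally show ?thesis unfolding z_def of_real_eq_iff .
qed

lemma quad_aux:
  fixes s a W :: real
  assumes s: "s = 1 \<or> s = -1" and W: "0 \<le> W" and all: "\<And>t. s * (2 * t * W + t\<^sup>2 * a) \<le> 0"
  shows "W = 0"
proof (rule ccontr)
  assume "W \<noteq> 0"
  with W have Wp: "W > 0" by simp
  define \<tau> where "\<tau> = W / (\<bar>a\<bar> + 1)"
  have tp: "\<tau> > 0" unfolding \<tau>_def using Wp by (simp add: add_pos_nonneg)
  have ta: "\<tau> * \<bar>a\<bar> \<le> W"
  proof -
    have "\<tau> * \<bar>a\<bar> = W * (\<bar>a\<bar> / (\<bar>a\<bar> + 1))" unfolding \<tau>_def by simp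
    also have "\<dots> \<le> W * 1" using Wp by (intro mult_left_mono) auto
    finally show ?thesis by simp
  qed
  have "s * (2 * (s * \<tau>) * W + (s * \<tau>)\<^sup>2 * a) \<le> 0" by (rule all)
  moreover have "s * (2 * (s * \<tau>) * W + (s * \<tau>)\<^sup>2 * a) = 2 * \<tau> * W + \<tau> * (\<tau> * (s * a))"
    using s by (auto simp: power2_eq_square algebra_simps)
  moreover have "\<tau> * (s * a) \<ge> - W"
  proof -
    have "s * a \<ge> - \<bar>a\<bar>" using s by auto
    hence "\<tau> * (s * a) \<ge> \<tau> * (- \<bar>a\<bar>)" using tp by (intro mult_left_mono) auto
    thus ?thesis using ta by simp
  qed
  ultimately have "2 * \<tau> * W + \<tau> * (- W) \<le> 0"
    using tp by (smt (verit) mult_left_mono)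
  hence "\<tau> * W \<le> 0" by (simp add: algebra_simps)
  moreover have "\<tau> * W > 0" using tp Wp by simp
  ultimately show False by simp
qed

lemma eig_extremal:
  fixes A :: "complex^'d^'d" and x0 :: "complex^'d"
  assumes s: "s = 1 \<or> s = -1"
    and all: "\<And>z. s * Qf A B m z \<le> s * (\<mu> * (norm z)\<^sup>2)"
    and x0: "Qf A B m x0 = \<mu> * (norm x0)\<^sup>2"
  shows "Nm A B m *v x0 = of_real \<mu> *s x0"
proof -
  define w where "w = Nm A B m *v x0 - of_real \<mu> *s x0"
  have "(norm w)\<^sup>2 = 0"
  proof (rule quad_aux[OF s, of _ "Qf A B m w - \<mu> * (norm w)\<^sup>2"])
    fix t
    have "s * (Qf A B m (x0 + t *\<^sub>R w) - \<mu> * (norm (x0 + t *\<^sub>R w))\<^sup>2) \<le> 0"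
      using all[of "x0 + t *\<^sub>R w"] by (simp add: right_diff_distrib)
    thus "s * (2 * t * (norm w)\<^sup>2 + t\<^sup>2 * (Qf A B m w - \<mu> * (norm w)\<^sup>2)) \<le> 0"
      using Q_expand[OF x0 w_def] by simp
  qed simp
  hence "w = 0" by simp
  thus ?thesis unfolding w_def by simp
qed

lemma Q_via_unit:
  fixes A :: "complex^'d^'d" and z :: "complex^'d"
  assumes "z \<noteq> 0"
  shows "Qf A B m z = (norm z)\<^sup>2 * Qf A B m ((1 / norm z) *\<^sub>R z)" "(1 / norm z) *\<^sub>R z \<in> sphere 0 1"
proof -
  have "z = norm z *\<^sub>R ((1 / norm z) *\<^sub>R z)" using assms by simp
  hence "Qf A B m z = Qf A B m (norm z *\<^sub>R ((1 / norm z) *\<^sub>R z))" by simp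
  thus "Qf A B m z = (norm z)\<^sup>2 * Qf A B m ((1 / norm z) *\<^sub>R z)" by (simp only: Q_scaleR)
  show "(1 / norm z) *\<^sub>R z \<in> sphere 0 1" using assms by simp
qed

lemma exists_max:
  fixes A :: "complex^'d^'d"
  shows "\<exists>x0::complex^'d. norm x0 = 1 \<and> (\<forall>z. Qf A B m z \<le> Qf A B m x0 * (norm z)\<^sup>2)"
proof -
  obtain x0 :: "complex^'d" where x0: "x0 \<in> sphere 0 1" and mx: "\<forall>y\<in>sphere 0 1. Qf A B m y \<le> Qf A B m x0"
    using continuous_attains_sup[OF compact_sphere _ Q_cont, of 0 "1::real" A B m] by auto
  have "Qf A B m z \<le> Qf A B m x0 * (norm z)\<^sup>2" for z
  proof (cases "z = 0")
    case True thus ?thesis by (simp add: Qf_def)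
  next
    case False
    have "Qf A B m ((1 / norm z) *\<^sub>R z) \<le> Qf A B m x0" using Q_via_unit(2)[OF False] mx by blast
    hence "(norm z)\<^sup>2 * Qf A B m ((1 / norm z) *\<^sub>R z) \<le> (norm z)\<^sup>2 * Qf A B m x0"
      by (simp add: mult_left_mono)
    thus ?thesis using Q_via_unit(1)[OF False, of A B m] by (simp add: mult.commute)
  qed
  thus ?thesis using x0 by auto
qed

lemma exists_min:
  fixes A :: "complex^'d^'d"
  shows "\<exists>x0::complex^'d. norm x0 = 1 \<and> (\<forall>z. Qf A B m x0 * (norm z)\<^sup>2 \<le> Qf A B m z)"
proof -
  obtain x0 :: "complex^'d" where x0: "x0 \<in> sphere 0 1" and mx: "\<forall>y\<in>sphere 0 1. Qf A B m x0 \<le> Qf A B m y"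
    using continuous_attains_inf[OF compact_sphere _ Q_cont, of 0 "1::real" A B m] by auto
  have "Qf A B m x0 * (norm z)\<^sup>2 \<le> Qf A B m z" for z
  proof (cases "z = 0")
    case True thus ?thesis by (simp add: Qf_def)
  next
    case False
    have "Qf A B m ((1 / norm z) *\<^sub>R z) \<ge> Qf A B m x0" using Q_via_unit(2)[OF False] mx by blast
    hence "(norm z)\<^sup>2 * Qf A B m ((1 / norm z) *\<^sub>R z) \<ge> (norm z)\<^sup>2 * Qf A B m x0"
      by (simp add: mult_left_mono)
    thus ?thesis using Q_via_unit(1)[OF False, of A B m] by (simp add: mult.commute)
  qed
  thus ?thesis using x0 by auto
qed

lemma eig_val:
  fixes A :: "complex^'d^'d" and x :: "complex^'d"
  assumes "Nm A B m *v x = of_real e *s x"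
  shows "Qf A B m x = e * (norm x)\<^sup>2"
proof -
  have "complex_of_real (Qf A B m x) = cinner x (Nm A B m *v x)" by (simp add: N_cinner H_self)
  also have "\<dots> = of_real (e * (norm x)\<^sup>2)" using assms by (simp add: cinner_scale_right cinner_self)
  finally show ?thesis by (simp only: of_real_eq_iff)
qed

lemma eig_nonneg:
  fixes A :: "complex^'d^'d"
  assumes "e \<in> real_eigenvalues (Nm A B m)"
  shows "0 \<le> e"
proof -
  obtain x :: "complex^'d" where x: "x \<noteq> 0" "Nm A B m *v x = of_real e *s x"
    using assms unfolding real_eigenvalues_def by auto
  have "0 \<le> e * (norm x)\<^sup>2" using eig_val[OF x(2)] Q_nonneg by metis
  moreover have "(norm x)\<^sup>2 > 0" using x by simp
  ultimately show ?thesis by (simp add: zero_le_mult_iff)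
qed

lemma eig_orth:
  fixes A :: "complex^'d^'d" and x1 x2 :: "complex^'d"
  assumes 1: "Nm A B m *v x1 = of_real e1 *s x1" and 2: "Nm A B m *v x2 = of_real e2 *s x2"
    and ne: "e1 \<noteq> e2"
  shows "cinner x1 x2 = 0"
proof -
  have "of_real e2 * cinner x1 x2 = cinner x1 (Nm A B m *v x2)" using 2 by (simp add: cinner_scale_right)
  also have "\<dots> = cnj (cinner x2 (Nm A B m *v x1))" by (simp add: N_cinner H_sym[of A B m x1 x2])
  also have "\<dots> = of_real e1 * cinner x1 x2" using 1 by (simp add: cinner_scale_right cinner_sym[of x2 x1])
  finally have "(of_real e2 - of_real e1) * cinner x1 x2 = 0" by (simp add: algebra_simps)
  thus ?thesis using ne by simp
qed

lemma eig_finite: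
  fixes A :: "complex^'d^'d"
  shows "finite (real_eigenvalues (Nm A B m))"
proof -
  let ?E = "real_eigenvalues (Nm A B m)"
  define f where "f e = (SOME x::complex^'d. x \<noteq> 0 \<and> Nm A B m *v x = of_real e *s x)" for e
  have f: "f e \<noteq> 0 \<and> Nm A B m *v f e = of_real e *s f e" if "e \<in> ?E" for e
    using that unfolding real_eigenvalues_def f_def by (rule CollectE) (rule someI_ex)
  have inj: "inj_on f ?E"
  proof (rule inj_onI)
    fix e1 e2 assume e: "e1 \<in> ?E" "e2 \<in> ?E" "f e1 = f e2"
    show "e1 = e2"
    proof (rule ccontr)
      assume "e1 \<noteq> e2"
      hence "cinner (f e1) (f e2) = 0" using f[OF e(1)] f[OF e(2)] eig_orth by blast
      hence "cinner (f e1) (f e1) = 0" using e(3) by simp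
      hence "f e1 = 0" by (simp add: cinner_self)
      thus False using f[OF e(1)] by simp
    qed
  qed
  have "independent (f ` ?E)"
  proof (rule pairwise_orthogonal_independent)
    show "pairwise orthogonal (f ` ?E)"
      unfolding pairwise_def orthogonal_def
    proof clarify
      fix e1 e2 assume e: "e1 \<in> ?E" "e2 \<in> ?E" "f e1 \<noteq> f e2"
      hence "e1 \<noteq> e2" by auto
      hence "cinner (f e1) (f e2) = 0" using f[OF e(1)] f[OF e(2)] eig_orth by blast
      thus "f e1 \<bullet> f e2 = 0" by (simp add: inner_cinner)
    qed
    show "0 \<notin> f ` ?E" using f by force
  qed
  hence "finite (f ` ?E)" using independent_bound by blast
  thus ?thesis using finite_imageD inj by blast
qed

lemma eig_bounds:
  fixes A :: "complex^'d^'d" and B :: "nat \<Rightarrow> complex^'d^'d" and m :: nat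
  defines "E \<equiv> real_eigenvalues (Nm A B m)"
  shows "finite E" "E \<noteq> {}" "0 \<le> Min E"
    "\<And>x::complex^'d. Min E * (norm x)\<^sup>2 \<le> Qf A B m x" "\<And>x::complex^'d. Qf A B m x \<le> Max E * (norm x)\<^sup>2"
proof -
  show fin: "finite E" unfolding E_def by (rule eig_finite)
  obtain x1 :: "complex^'d" where x1: "norm x1 = 1" "\<forall>z. Qf A B m z \<le> Qf A B m x1 * (norm z)\<^sup>2"
    using exists_max by blast
  have "Nm A B m *v x1 = of_real (Qf A B m x1) *s x1"
    by (rule eig_extremal[of 1]) (use x1 in auto)
  hence m1: "Qf A B m x1 \<in> E" unfolding E_def real_eigenvalues_def
    by (intro CollectI exI[of _ x1]) (use x1(1) in auto)
  obtain x2 :: "complex^'d" where x2: "norm x2 = 1" "\<forall>z. Qf A B m x2 * (norm z)\<^sup>2 \<le> Qf A B m z"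
    using exists_min by blast
  have "Nm A B m *v x2 = of_real (Qf A B m x2) *s x2"
    by (rule eig_extremal[of "-1"]) (use x2 in auto)
  hence m2: "Qf A B m x2 \<in> E" unfolding E_def real_eigenvalues_def
    by (intro CollectI exI[of _ x2]) (use x2(1) in auto)
  show "E \<noteq> {}" using m1 by auto
  show "0 \<le> Min E" using fin m1 eig_nonneg unfolding E_def by (metis Min_in empty_iff)
  fix x :: "complex^'d"
  have "Min E \<le> Qf A B m x2" using fin m2 by simp
  hence "Min E * (norm x)\<^sup>2 \<le> Qf A B m x2 * (norm x)\<^sup>2" by (simp add: mult_right_mono)
  thus "Min E * (norm x)\<^sup>2 \<le> Qf A B m x" using x2(2) by (meson order_trans)
  have "Qf A B m x1 \<le> Max E" using fin m1 by simp
  hence "Qf A B m x1 * (norm x)\<^sup>2 \<le> Max E * (norm x)\<^sup>2" by (simp add: mult_right_mono)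
  thus "Qf A B m x \<le> Max E * (norm x)\<^sup>2" using x1(2) by (meson order_trans)
qed


lemma borel_measurable_cnj[measurable (raw)]:
  fixes f :: "'a \<Rightarrow> complex"
  assumes "f \<in> borel_measurable N"
  shows "(\<lambda>x. cnj (f x)) \<in> borel_measurable N"
proof -
  have "cnj \<in> borel_measurable borel"
    by (intro borel_measurable_continuous_onI continuous_intros)
  from measurable_compose[OF assms this] show ?thesis .
qed

lemma swap3: "(\<Sum>k\<in>K. \<Sum>a\<in>A. \<Sum>b\<in>B'. f k a b) = (\<Sum>a\<in>A. \<Sum>b\<in>B'. \<Sum>k\<in>K. f k a b)"
proof -
  have "(\<Sum>k\<in>K. \<Sum>a\<in>A. \<Sum>b\<in>B'. f k a b) = (\<Sum>a\<in>A. \<Sum>k\<in>K. \<Sum>b\<in>B'. f k a b)"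
    by (rule sum.swap)
  also have "\<dots> = (\<Sum>a\<in>A. \<Sum>b\<in>B'. \<Sum>k\<in>K. f k a b)"
    by (rule sum.cong[OF refl]) (rule sum.swap)
  finally show ?thesis .
qed

lemma traj_cong:
  assumes "\<And>j k. 1 \<le> j \<Longrightarrow> j \<le> n \<Longrightarrow> k \<in> {1..m} \<Longrightarrow> \<xi> j k \<omega> = \<xi>2 j k \<omega>2"
  shows "traj A B m \<xi> u n \<omega> = traj A B m \<xi>2 u n \<omega>2"
  using assms by (induction n) auto

lemma mv_comp_meas:
  fixes x :: "'a \<Rightarrow> complex^'d"
  assumes "\<And>a. (\<lambda>\<omega>. x \<omega> $ a) \<in> borel_measurable N"
  shows "(\<lambda>\<omega>. (P *v x \<omega>) $ i) \<in> borel_measurable N"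
  unfolding matrix_vector_mult_def using assms by simp

lemma traj_meas:
  assumes "\<And>j k. 1 \<le> j \<Longrightarrow> j \<le> n \<Longrightarrow> k \<in> {1..m} \<Longrightarrow> \<xi> j k \<in> borel_measurable N"
  shows "(\<lambda>\<omega>. traj A B m \<xi> u n \<omega> $ i) \<in> borel_measurable N"
  using assms
proof (induction n arbitrary: i)
  case 0 thus ?case by simp
next
  case (Suc n)
  have IH: "\<And>a. (\<lambda>\<omega>. traj A B m \<xi> u n \<omega> $ a) \<in> borel_measurable N"
    using Suc.prems by (intro Suc.IH) auto
  have m1: "(\<lambda>\<omega>. (P *v traj A B m \<xi> u n \<omega>) $ a) \<in> borel_measurable N" for P a
    by (rule mv_comp_meas[OF IH])
  have m2: "\<xi> (Suc n) k \<in> borel_measurable N" if "k \<in> {1..m}" for k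
    using Suc.prems that by auto
  show ?case using m1 m2 by (simp del: atLeastAtMost_iff) (intro borel_measurable_add borel_measurable_sum borel_measurable_times m1 borel_measurable_of_real m2; auto)
qed

lemma bilin:
  fixes x y :: "'a \<Rightarrow> complex^'d"
  assumes IH: "\<And>a b. integrable M (\<lambda>\<omega>. x \<omega> $ a * cnj (y \<omega> $ b))"
  shows "integrable M (\<lambda>\<omega>. (P *v x \<omega>) $ i * cnj ((R *v y \<omega>) $ j))"
    "integral\<^sup>L M (\<lambda>\<omega>. (P *v x \<omega>) $ i * cnj ((R *v y \<omega>) $ j))
      = (\<Sum>a\<in>UNIV. \<Sum>b\<in>UNIV. P$i$a * cnj (R$j$b) * integral\<^sup>L M (\<lambda>\<omega>. x \<omega> $ a * cnj (y \<omega> $ b)))"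
proof -
  have e: "(\<lambda>\<omega>. (P *v x \<omega>) $ i * cnj ((R *v y \<omega>) $ j))
      = (\<lambda>\<omega>. \<Sum>a\<in>UNIV. \<Sum>b\<in>UNIV. (P$i$a * cnj (R$j$b)) * (x \<omega> $ a * cnj (y \<omega> $ b)))"
    unfolding matrix_vector_mult_def by (simp add: sum_distrib_left sum_distrib_right mult_ac) (rule ext, rule sum.swap)
  show "integrable M (\<lambda>\<omega>. (P *v x \<omega>) $ i * cnj ((R *v y \<omega>) $ j))"
    unfolding e using IH by simp
  show "integral\<^sup>L M (\<lambda>\<omega>. (P *v x \<omega>) $ i * cnj ((R *v y \<omega>) $ j))
      = (\<Sum>a\<in>UNIV. \<Sum>b\<in>UNIV. P$i$a * cnj (R$j$b) * integral\<^sup>L M (\<lambda>\<omega>. x \<omega> $ a * cnj (y \<omega> $ b)))"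
    unfolding e using IH by (simp add: integral_sum)
qed

lemma (in prob_space) indep_prod:
  fixes X :: "'i \<Rightarrow> 'a \<Rightarrow> real" and f g :: "('i \<Rightarrow> real) \<Rightarrow> complex"
  assumes ind: "indep_vars (\<lambda>_. borel) X I" and J: "J1 \<inter> J2 = {}" "J1 \<subseteq> I" "J2 \<subseteq> I"
    and f: "f \<in> borel_measurable (PiM J1 (\<lambda>_. borel))" and g: "g \<in> borel_measurable (PiM J2 (\<lambda>_. borel))"
    and F: "\<And>\<omega>. F \<omega> = f (restrict (\<lambda>i. X i \<omega>) J1)" and G: "\<And>\<omega>. G \<omega> = g (restrict (\<lambda>i. X i \<omega>) J2)"
    and iF: "integrable M F" and iG: "integrable M G"
  shows "integrable M (\<lambda>\<omega>. F \<omega> * G \<omega>)" "integral\<^sup>L M (\<lambda>\<omega>. F \<omega> * G \<omega>) = integral\<^sup>L M F * integral\<^sup>L M G"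
proof -
  have "indep_var borel (f \<circ> (\<lambda>\<omega>. restrict (\<lambda>i. X i \<omega>) J1)) borel (g \<circ> (\<lambda>\<omega>. restrict (\<lambda>i. X i \<omega>) J2))"
    by (rule indep_var_compose[OF indep_var_restrict[OF ind J] f g])
  moreover have "f \<circ> (\<lambda>\<omega>. restrict (\<lambda>i. X i \<omega>) J1) = F" "g \<circ> (\<lambda>\<omega>. restrict (\<lambda>i. X i \<omega>) J2) = G"
    using F G by (auto simp: fun_eq_iff)
  ultimately have iv: "indep_var borel F borel G" by simp
  show "integrable M (\<lambda>\<omega>. F \<omega> * G \<omega>)" by (rule indep_var_integrable[OF iv iF iG])
  show "integral\<^sup>L M (\<lambda>\<omega>. F \<omega> * G \<omega>) = integral\<^sup>L M F * integral\<^sup>L M G"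
    by (rule indep_var_lebesgue_integral[OF iv iF iG])
qed

definition zeta :: "nat \<Rightarrow> nat \<Rightarrow> (nat \<times> nat \<Rightarrow> real) \<Rightarrow> real" where
  "zeta j k z = z (j, k)"

locale setting = prob_space M for M :: "'a measure" +
  fixes m :: nat and \<xi> :: "nat \<Rightarrow> nat \<Rightarrow> 'a \<Rightarrow> real"
  assumes ind: "indep_vars (\<lambda>_. borel) (\<lambda>(n, k). \<xi> n k) ({1..} \<times> {1..m})"
    and meas: "\<And>n k. n \<ge> 1 \<Longrightarrow> k \<in> {1..m} \<Longrightarrow> \<xi> n k \<in> borel_measurable M"
    and sqint: "\<And>n k. n \<ge> 1 \<Longrightarrow> k \<in> {1..m} \<Longrightarrow> integrable M (\<lambda>\<omega>. (\<xi> n k \<omega>)\<^sup>2)"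
    and mean0: "\<And>n k. n \<ge> 1 \<Longrightarrow> k \<in> {1..m} \<Longrightarrow> integral\<^sup>L M (\<xi> n k) = 0"
    and var1: "\<And>n k. n \<ge> 1 \<Longrightarrow> k \<in> {1..m} \<Longrightarrow> integral\<^sup>L M (\<lambda>\<omega>. (\<xi> n k \<omega>)\<^sup>2) = 1"
begin

lemma xi_int: "n \<ge> 1 \<Longrightarrow> k \<in> {1..m} \<Longrightarrow> integrable M (\<xi> n k)"
  using square_integrable_imp_integrable[OF meas sqint] by auto

lemma indep_G:
  fixes f :: "(nat \<times> nat \<Rightarrow> real) \<Rightarrow> complex" and A :: "complex^'d^'d"
    and P R :: "complex^'d^'d"
  assumes f: "f \<in> borel_measurable (PiM ({Suc n} \<times> {1..m}) (\<lambda>_. borel))"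
    and F: "\<And>\<omega>. F \<omega> = f (restrict (\<lambda>i. (\<lambda>(n, k). \<xi> n k) i \<omega>) ({Suc n} \<times> {1..m}))"
    and iF: "integrable M F"
    and IH: "\<And>a b. integrable M (\<lambda>\<omega>. traj A B m \<xi> u n \<omega> $ a * cnj (traj A B m \<xi> v n \<omega> $ b))"
  shows "integrable M (\<lambda>\<omega>. F \<omega> * ((P *v traj A B m \<xi> u n \<omega>) $ i * cnj ((R *v traj A B m \<xi> v n \<omega>) $ j)))"
    "integral\<^sup>L M (\<lambda>\<omega>. F \<omega> * ((P *v traj A B m \<xi> u n \<omega>) $ i * cnj ((R *v traj A B m \<xi> v n \<omega>) $ j)))
     = integral\<^sup>L M F * integral\<^sup>L M (\<lambda>\<omega>. (P *v traj A B m \<xi> u n \<omega>) $ i * cnj ((R *v traj A B m \<xi> v n \<omega>) $ j))"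
proof -
  let ?J2 = "{1..n} \<times> {1..m}"
  define g where "g z = (P *v traj A B m zeta u n z) $ i * cnj ((R *v traj A B m zeta v n z) $ j)" for z
  have zm: "zeta j' k \<in> borel_measurable (PiM ?J2 (\<lambda>_. borel))" if "1 \<le> j'" "j' \<le> n" "k \<in> {1..m}" for j' k
    unfolding zeta_def using that by (intro measurable_component_singleton) auto
  have tm: "(\<lambda>z. traj A B m zeta w n z $ a) \<in> borel_measurable (PiM ?J2 (\<lambda>_. borel))" for w a
    by (rule traj_meas) (rule zm)
  have gm: "g \<in> borel_measurable (PiM ?J2 (\<lambda>_. borel))"
    unfolding g_def by (intro borel_measurable_times borel_measurable_cnj mv_comp_meas tm)
  have G: "(P *v traj A B m \<xi> u n \<omega>) $ i * cnj ((R *v traj A B m \<xi> v n \<omega>) $ j)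
      = g (restrict (\<lambda>i. (\<lambda>(n, k). \<xi> n k) i \<omega>) ?J2)" for \<omega>
  proof -
    have "traj A B m \<xi> w n \<omega> = traj A B m zeta w n (restrict (\<lambda>i. (\<lambda>(n, k). \<xi> n k) i \<omega>) ?J2)" for w
      by (rule traj_cong) (auto simp: zeta_def)
    thus ?thesis unfolding g_def by simp
  qed
  note ip = indep_prod[OF ind _ _ _ f gm F G iF bilin(1)[OF IH]]
  show "integrable M (\<lambda>\<omega>. F \<omega> * ((P *v traj A B m \<xi> u n \<omega>) $ i * cnj ((R *v traj A B m \<xi> v n \<omega>) $ j)))"
    by (rule ip(1)) auto
  show "integral\<^sup>L M (\<lambda>\<omega>. F \<omega> * ((P *v traj A B m \<xi> u n \<omega>) $ i * cnj ((R *v traj A B m \<xi> v n \<omega>) $ j)))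
     = integral\<^sup>L M F * integral\<^sup>L M (\<lambda>\<omega>. (P *v traj A B m \<xi> u n \<omega>) $ i * cnj ((R *v traj A B m \<xi> v n \<omega>) $ j))"
    by (rule ip(2)) auto
qed

lemma xi_prod:
  assumes "k \<in> {1..m}" "l \<in> {1..m}" "n \<ge> 1"
  shows "integrable M (\<lambda>\<omega>. complex_of_real (\<xi> n k \<omega>) * complex_of_real (\<xi> n l \<omega>))"
    "integral\<^sup>L M (\<lambda>\<omega>. complex_of_real (\<xi> n k \<omega>) * complex_of_real (\<xi> n l \<omega>)) = (if k = l then 1 else 0)"
proof -
  have "integrable M (\<lambda>\<omega>. complex_of_real (\<xi> n k \<omega>) * complex_of_real (\<xi> n l \<omega>))
    \<and> integral\<^sup>L M (\<lambda>\<omega>. complex_of_real (\<xi> n k \<omega>) * complex_of_real (\<xi> n l \<omega>)) = (if k = l then 1 else 0)"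
  proof (cases "k = l")
    case True
    have e: "(\<lambda>\<omega>. complex_of_real (\<xi> n k \<omega>) * complex_of_real (\<xi> n l \<omega>)) = (\<lambda>\<omega>. complex_of_real ((\<xi> n k \<omega>)\<^sup>2))"
      using True by (simp add: power2_eq_square)
    have i: "integrable M (\<lambda>\<omega>. complex_of_real ((\<xi> n k \<omega>)\<^sup>2))"
      using sqint[of n k] assms by (intro integrable_of_real) auto
    have v: "integral\<^sup>L M (\<lambda>\<omega>. complex_of_real ((\<xi> n k \<omega>)\<^sup>2)) = 1"
      using var1[of n k] assms by (simp only: integral_complex_of_real) simp
    show ?thesis by (simp only: e) (use i v True in simp)
  next
    case False
    define f where "f z = complex_of_real (z (n, k))" for z :: "nat \<times> nat \<Rightarrow> real"
    define g where "g z = complex_of_real (z (n, l))" for z :: "nat \<times> nat \<Rightarrow> real"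
    have fm: "f \<in> borel_measurable (PiM {(n, k)} (\<lambda>_. borel))" unfolding f_def
      by measurable
    have gm: "g \<in> borel_measurable (PiM {(n, l)} (\<lambda>_. borel))" unfolding g_def
      by measurable
    note ip = indep_prod[OF ind _ _ _ fm gm, of "\<lambda>\<omega>. complex_of_real (\<xi> n k \<omega>)" "\<lambda>\<omega>. complex_of_real (\<xi> n l \<omega>)"]
    have "integrable M (\<lambda>\<omega>. complex_of_real (\<xi> n k \<omega>) * complex_of_real (\<xi> n l \<omega>))"
      by (rule ip(1)) (use False assms xi_int in \<open>auto simp: f_def g_def\<close>)
    moreover have "integral\<^sup>L M (\<lambda>\<omega>. complex_of_real (\<xi> n k \<omega>) * complex_of_real (\<xi> n l \<omega>)) = 0"
      by (subst ip(2)) (use False assms xi_int mean0 in \<open>auto simp: f_def g_def\<close>)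
    ultimately show ?thesis using False by simp
  qed
  thus "integrable M (\<lambda>\<omega>. complex_of_real (\<xi> n k \<omega>) * complex_of_real (\<xi> n l \<omega>))"
    "integral\<^sup>L M (\<lambda>\<omega>. complex_of_real (\<xi> n k \<omega>) * complex_of_real (\<xi> n l \<omega>)) = (if k = l then 1 else 0)"
    by auto
qed


lemma step:
  fixes A :: "complex^'d^'d"
  assumes IH: "\<And>a b. integrable M (\<lambda>\<omega>. traj A B m \<xi> u n \<omega> $ a * cnj (traj A B m \<xi> v n \<omega> $ b))"
  shows "integrable M (\<lambda>\<omega>. traj A B m \<xi> u (Suc n) \<omega> $ a * cnj (traj A B m \<xi> v (Suc n) \<omega> $ b))"
    "integral\<^sup>L M (\<lambda>\<omega>. traj A B m \<xi> u (Suc n) \<omega> $ a * cnj (traj A B m \<xi> v (Suc n) \<omega> $ b))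
     = integral\<^sup>L M (\<lambda>\<omega>. (A *v traj A B m \<xi> u n \<omega>) $ a * cnj ((A *v traj A B m \<xi> v n \<omega>) $ b))
       + (\<Sum>k\<in>{1..m}. integral\<^sup>L M (\<lambda>\<omega>. (B k *v traj A B m \<xi> u n \<omega>) $ a * cnj ((B k *v traj A B m \<xi> v n \<omega>) $ b)))"
proof -
  let ?x = "traj A B m \<xi> u n" and ?y = "traj A B m \<xi> v n"
  define c where "c k \<omega> = complex_of_real (\<xi> (Suc n) k \<omega>)" for k \<omega>
  define T1 where "T1 \<omega> = (A *v ?x \<omega>) $ a * cnj ((A *v ?y \<omega>) $ b)" for \<omega>
  define G2 where "G2 l \<omega> = (A *v ?x \<omega>) $ a * cnj ((B l *v ?y \<omega>) $ b)" for l \<omega>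
  define G3 where "G3 k \<omega> = (B k *v ?x \<omega>) $ a * cnj ((A *v ?y \<omega>) $ b)" for k \<omega>
  define G4 where "G4 k l \<omega> = (B k *v ?x \<omega>) $ a * cnj ((B l *v ?y \<omega>) $ b)" for k l \<omega>
  have expand: "(\<lambda>\<omega>. traj A B m \<xi> u (Suc n) \<omega> $ a * cnj (traj A B m \<xi> v (Suc n) \<omega> $ b))
    = (\<lambda>\<omega>. T1 \<omega> + (\<Sum>l\<in>{1..m}. c l \<omega> * G2 l \<omega>) + (\<Sum>k\<in>{1..m}. c k \<omega> * G3 k \<omega>)
         + (\<Sum>k\<in>{1..m}. \<Sum>l\<in>{1..m}. (c k \<omega> * c l \<omega>) * G4 k l \<omega>))"
    by (rule ext) (simp add: T1_def G2_def G3_def G4_def c_def distrib_left distrib_right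
        sum_distrib_left sum_distrib_right mult_ac del: atLeastAtMost_iff, subst sum.swap, simp add: mult_ac)
  let ?J1 = "{Suc n} \<times> {1..m}"
  have cF: "c l \<omega> = (\<lambda>z. complex_of_real (z (Suc n, l))) (restrict (\<lambda>i. (\<lambda>(n, k). \<xi> n k) i \<omega>) ?J1)"
    if "l \<in> {1..m}" for l \<omega> using that by (simp add: c_def)
  have cm: "(\<lambda>z. complex_of_real (z (Suc n, l))) \<in> borel_measurable (PiM ?J1 (\<lambda>_. borel))"
    if "l \<in> {1..m}" for l
  proof -
    have "(\<lambda>z. z (Suc n, l)) \<in> borel_measurable (PiM ?J1 (\<lambda>_. borel))"
      using that by (intro measurable_component_singleton) auto
    from measurable_compose[OF this borel_measurable_of_real] show ?thesis by (simp add: comp_def)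
  qed
  have ci: "integrable M (c l)" if "l \<in> {1..m}" for l
    unfolding c_def using xi_int[of "Suc n" l] that by auto
  have ce: "integral\<^sup>L M (c l) = 0" if "l \<in> {1..m}" for l
    unfolding c_def using mean0[of "Suc n" l] that by simp
  have ccF: "c k \<omega> * c l \<omega> = (\<lambda>z. complex_of_real (z (Suc n, k)) * complex_of_real (z (Suc n, l)))
      (restrict (\<lambda>i. (\<lambda>(n, k). \<xi> n k) i \<omega>) ?J1)"
    if "k \<in> {1..m}" "l \<in> {1..m}" for k l \<omega> using that by (simp add: c_def)
  have ccm: "(\<lambda>z. complex_of_real (z (Suc n, k)) * complex_of_real (z (Suc n, l))) \<in> borel_measurable (PiM ?J1 (\<lambda>_. borel))"
    if "k \<in> {1..m}" "l \<in> {1..m}" for k l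
    using cm[OF that(1)] cm[OF that(2)] by (rule borel_measurable_times)
  have cci: "integrable M (\<lambda>\<omega>. c k \<omega> * c l \<omega>)" if "k \<in> {1..m}" "l \<in> {1..m}" for k l
    unfolding c_def using xi_prod(1)[of k l "Suc n"] that by auto
  have cce: "integral\<^sup>L M (\<lambda>\<omega>. c k \<omega> * c l \<omega>) = (if k = l then 1 else 0)" if "k \<in> {1..m}" "l \<in> {1..m}" for k l
    unfolding c_def using xi_prod(2)[of k l "Suc n"] that by auto
  have iT1: "integrable M T1" unfolding T1_def by (rule bilin(1)[OF IH])
  have i2: "integrable M (\<lambda>\<omega>. c l \<omega> * G2 l \<omega>)" and e2: "integral\<^sup>L M (\<lambda>\<omega>. c l \<omega> * G2 l \<omega>) = 0"
    if "l \<in> {1..m}" for l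
    unfolding G2_def using indep_G[OF cm[OF that] cF[OF that] ci[OF that] IH] ce[OF that] by auto
  have i3: "integrable M (\<lambda>\<omega>. c k \<omega> * G3 k \<omega>)" and e3: "integral\<^sup>L M (\<lambda>\<omega>. c k \<omega> * G3 k \<omega>) = 0"
    if "k \<in> {1..m}" for k
    unfolding G3_def using indep_G[OF cm[OF that] cF[OF that] ci[OF that] IH] ce[OF that] by auto
  have i4: "integrable M (\<lambda>\<omega>. (c k \<omega> * c l \<omega>) * G4 k l \<omega>)"
    and e4: "integral\<^sup>L M (\<lambda>\<omega>. (c k \<omega> * c l \<omega>) * G4 k l \<omega>) = (if k = l then integral\<^sup>L M (G4 k k) else 0)"
    if "k \<in> {1..m}" "l \<in> {1..m}" for k l
    unfolding G4_def using indep_G[OF ccm[OF that] ccF[OF that] cci[OF that] IH] cce[OF that] by auto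
  show "integrable M (\<lambda>\<omega>. traj A B m \<xi> u (Suc n) \<omega> $ a * cnj (traj A B m \<xi> v (Suc n) \<omega> $ b))"
  proof -
    have s2: "integrable M (\<lambda>\<omega>. \<Sum>l\<in>{1..m}. c l \<omega> * G2 l \<omega>)" by (rule Bochner_Integration.integrable_sum) (rule i2)
    have s3: "integrable M (\<lambda>\<omega>. \<Sum>k\<in>{1..m}. c k \<omega> * G3 k \<omega>)" by (rule Bochner_Integration.integrable_sum) (rule i3)
    have s4: "integrable M (\<lambda>\<omega>. \<Sum>k\<in>{1..m}. \<Sum>l\<in>{1..m}. (c k \<omega> * c l \<omega>) * G4 k l \<omega>)"
      by (rule Bochner_Integration.integrable_sum, rule Bochner_Integration.integrable_sum) (rule i4)
    show ?thesis unfolding expand by (rule Bochner_Integration.integrable_add[OF Bochner_Integration.integrable_add[OF Bochner_Integration.integrable_add[OF iT1 s2] s3] s4])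
  qed
  have "integral\<^sup>L M (\<lambda>\<omega>. traj A B m \<xi> u (Suc n) \<omega> $ a * cnj (traj A B m \<xi> v (Suc n) \<omega> $ b))
     = integral\<^sup>L M T1 + (\<Sum>l\<in>{1..m}. integral\<^sup>L M (\<lambda>\<omega>. c l \<omega> * G2 l \<omega>))
       + (\<Sum>k\<in>{1..m}. integral\<^sup>L M (\<lambda>\<omega>. c k \<omega> * G3 k \<omega>))
       + (\<Sum>k\<in>{1..m}. \<Sum>l\<in>{1..m}. integral\<^sup>L M (\<lambda>\<omega>. (c k \<omega> * c l \<omega>) * G4 k l \<omega>))"
    unfolding expand using iT1 i2 i3 i4
    by (simp add: Bochner_Integration.integral_add Bochner_Integration.integrable_sum Bochner_Integration.integral_sum del: atLeastAtMost_iff)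
  also have "\<dots> = integral\<^sup>L M T1 + (\<Sum>k\<in>{1..m}. integral\<^sup>L M (G4 k k))"
  proof -
    have "(\<Sum>k\<in>{1..m}. \<Sum>l\<in>{1..m}. integral\<^sup>L M (\<lambda>\<omega>. (c k \<omega> * c l \<omega>) * G4 k l \<omega>))
        = (\<Sum>k\<in>{1..m}. \<Sum>l\<in>{1..m}. if k = l then integral\<^sup>L M (G4 k k) else 0)"
      by (intro sum.cong refl) (rule e4)
    also have "\<dots> = (\<Sum>k\<in>{1..m}. integral\<^sup>L M (G4 k k))"
      by (intro sum.cong refl) (simp add: sum.delta)
    finally show ?thesis using e2 e3 by simp
  qed
  finally show "integral\<^sup>L M (\<lambda>\<omega>. traj A B m \<xi> u (Suc n) \<omega> $ a * cnj (traj A B m \<xi> v (Suc n) \<omega> $ b))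
     = integral\<^sup>L M (\<lambda>\<omega>. (A *v traj A B m \<xi> u n \<omega>) $ a * cnj ((A *v traj A B m \<xi> v n \<omega>) $ b))
       + (\<Sum>k\<in>{1..m}. integral\<^sup>L M (\<lambda>\<omega>. (B k *v traj A B m \<xi> u n \<omega>) $ a * cnj ((B k *v traj A B m \<xi> v n \<omega>) $ b)))"
    unfolding T1_def G4_def .
qed


lemma integ_all:
  fixes A :: "complex^'d^'d"
  shows "integrable M (\<lambda>\<omega>. traj A B m \<xi> u n \<omega> $ a * cnj (traj A B m \<xi> v n \<omega> $ b))"
proof (induction n arbitrary: a b)
  case 0 show ?case by simp
next
  case (Suc n) show ?case by (rule step(1)) (rule Suc.IH)
qed

lemma cov_step:
  fixes A :: "complex^'d^'d"
  shows "cvec (covmat M (traj A B m \<xi> u (Suc n)) (traj A B m \<xi> v (Suc n)))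
    = (kron (cmat_conj A) A + (\<Sum>k\<in>{1..m}. kron (cmat_conj (B k)) (B k))) *v
        cvec (covmat M (traj A B m \<xi> u n) (traj A B m \<xi> v n))"
proof -
  let ?V = "\<lambda>a b. integral\<^sup>L M (\<lambda>\<omega>. traj A B m \<xi> u n \<omega> $ a * cnj (traj A B m \<xi> v n \<omega> $ b))"
  have IH: "\<And>a b. integrable M (\<lambda>\<omega>. traj A B m \<xi> u n \<omega> $ a * cnj (traj A B m \<xi> v n \<omega> $ b))"
    by (rule integ_all)
  have "cvec (covmat M (traj A B m \<xi> u (Suc n)) (traj A B m \<xi> v (Suc n))) $ (p, q)
     = ((kron (cmat_conj A) A + (\<Sum>k\<in>{1..m}. kron (cmat_conj (B k)) (B k))) *v
        cvec (covmat M (traj A B m \<xi> u n) (traj A B m \<xi> v n))) $ (p, q)" for p q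
  proof -
    define K where "K a b = A$q$a * cnj (A$p$b) + (\<Sum>k\<in>{1..m}. B k$q$a * cnj (B k$p$b))" for a b
    have "cvec (covmat M (traj A B m \<xi> u (Suc n)) (traj A B m \<xi> v (Suc n))) $ (p, q)
        = (\<Sum>a\<in>UNIV. \<Sum>b\<in>UNIV. A$q$a * cnj (A$p$b) * ?V a b)
          + (\<Sum>k\<in>{1..m}. \<Sum>a\<in>UNIV. \<Sum>b\<in>UNIV. B k$q$a * cnj (B k$p$b) * ?V a b)"
    proof -
      have "cvec (covmat M (traj A B m \<xi> u (Suc n)) (traj A B m \<xi> v (Suc n))) $ (p, q)
        = integral\<^sup>L M (\<lambda>\<omega>. traj A B m \<xi> u (Suc n) \<omega> $ q * cnj (traj A B m \<xi> v (Suc n) \<omega> $ p))"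
        unfolding cvec_def covmat_def by (simp del: traj.simps)
      thus ?thesis by (simp only: step(2)[OF IH] bilin(2)[OF IH])
    qed
    also have "\<dots> = (\<Sum>a\<in>UNIV. \<Sum>b\<in>UNIV. K a b * ?V a b)"
    proof -
      have "(\<Sum>k\<in>{1..m}. \<Sum>a\<in>UNIV. \<Sum>b\<in>UNIV. B k$q$a * cnj (B k$p$b) * ?V a b)
          = (\<Sum>a\<in>UNIV. \<Sum>b\<in>UNIV. \<Sum>k\<in>{1..m}. B k$q$a * cnj (B k$p$b) * ?V a b)"
        by (rule swap3)
      thus ?thesis unfolding K_def by (simp add: distrib_right sum.distrib sum_distrib_right)
    qed
    also have "\<dots> = (\<Sum>c\<in>UNIV. \<Sum>e\<in>UNIV. K e c * ?V e c)"
      by (rule sum.swap)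
    also have "\<dots> = (\<Sum>ce\<in>UNIV. K (snd ce) (fst ce) * ?V (snd ce) (fst ce))"
      by (subst UNIV_Times_UNIV[symmetric], subst sum.cartesian_product) (simp add: case_prod_beta)
    also have "\<dots> = ((kron (cmat_conj A) A + (\<Sum>k\<in>{1..m}. kron (cmat_conj (B k)) (B k))) *v
        cvec (covmat M (traj A B m \<xi> u n) (traj A B m \<xi> v n))) $ (p, q)"
      unfolding matrix_vector_mult_def K_def cvec_def covmat_def kron_def cmat_conj_def
      by (simp add: mult_ac del: atLeastAtMost_iff)
    finally show ?thesis .
  qed
  thus ?thesis by (simp add: vec_eq_iff)
qed

lemma re_int:
  fixes g :: "'a \<Rightarrow> real"
  assumes "integrable M (\<lambda>\<omega>. complex_of_real (g \<omega>))"
  shows "integrable M g" "integral\<^sup>L M g = Re (integral\<^sup>L M (\<lambda>\<omega>. complex_of_real (g \<omega>)))"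
proof -
  show "integrable M g" using integrable_Re[OF assms] by simp
  show "integral\<^sup>L M g = Re (integral\<^sup>L M (\<lambda>\<omega>. complex_of_real (g \<omega>)))" by simp
qed

lemma nsq_sum: "complex_of_real ((norm (y::complex^'d))\<^sup>2) = (\<Sum>i\<in>UNIV. y$i * cnj (y$i))"
  using cinner_self[of y] unfolding cinner_def by (simp add: mult.commute)


end

context setting begin

lemma r_step:
  fixes A :: "complex^'d^'d"
  shows "integrable M (\<lambda>\<omega>. (norm (traj A B m \<xi> u n \<omega>))\<^sup>2)"
    "integrable M (\<lambda>\<omega>. Qf A B m (traj A B m \<xi> u n \<omega>))"
    "integral\<^sup>L M (\<lambda>\<omega>. (norm (traj A B m \<xi> u (Suc n) \<omega>))\<^sup>2) = integral\<^sup>L M (\<lambda>\<omega>. Qf A B m (traj A B m \<xi> u n \<omega>))"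
proof -
  let ?x = "traj A B m \<xi> u n"
  have IH: "\<And>a b. integrable M (\<lambda>\<omega>. traj A B m \<xi> u n \<omega> $ a * cnj (traj A B m \<xi> u n \<omega> $ b))"
    by (rule integ_all)
  have cn: "integrable M (\<lambda>\<omega>. complex_of_real ((norm (traj A B m \<xi> u k \<omega>))\<^sup>2))" for k
    unfolding nsq_sum by (intro Bochner_Integration.integrable_sum integ_all)
  show "integrable M (\<lambda>\<omega>. (norm (traj A B m \<xi> u n \<omega>))\<^sup>2)" by (rule re_int(1)[OF cn])
  have qe: "complex_of_real (Qf A B m y) = (\<Sum>i\<in>UNIV. (A *v y)$i * cnj ((A *v y)$i))
     + (\<Sum>k\<in>{1..m}. \<Sum>i\<in>UNIV. (B k *v y)$i * cnj ((B k *v y)$i))" for y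
    by (simp only: Qf_def of_real_add of_real_sum nsq_sum)
  have iq: "integrable M (\<lambda>\<omega>. complex_of_real (Qf A B m (?x \<omega>)))"
    unfolding qe
    by (intro Bochner_Integration.integrable_add Bochner_Integration.integrable_sum bilin(1)[OF IH])
  show "integrable M (\<lambda>\<omega>. Qf A B m (traj A B m \<xi> u n \<omega>))" by (rule re_int(1)[OF iq])
  have "integral\<^sup>L M (\<lambda>\<omega>. complex_of_real ((norm (traj A B m \<xi> u (Suc n) \<omega>))\<^sup>2))
      = (\<Sum>i\<in>UNIV. integral\<^sup>L M (\<lambda>\<omega>. traj A B m \<xi> u (Suc n) \<omega> $ i * cnj (traj A B m \<xi> u (Suc n) \<omega> $ i)))"
    unfolding nsq_sum by (intro Bochner_Integration.integral_sum integ_all)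
  also have "\<dots> = (\<Sum>i\<in>UNIV. integral\<^sup>L M (\<lambda>\<omega>. (A *v ?x \<omega>) $ i * cnj ((A *v ?x \<omega>) $ i))
       + (\<Sum>k\<in>{1..m}. integral\<^sup>L M (\<lambda>\<omega>. (B k *v ?x \<omega>) $ i * cnj ((B k *v ?x \<omega>) $ i))))"
    by (simp only: step(2)[OF IH])
  also have "\<dots> = (\<Sum>i\<in>UNIV. integral\<^sup>L M (\<lambda>\<omega>. (A *v ?x \<omega>) $ i * cnj ((A *v ?x \<omega>) $ i)))
       + (\<Sum>i\<in>UNIV. \<Sum>k\<in>{1..m}. integral\<^sup>L M (\<lambda>\<omega>. (B k *v ?x \<omega>) $ i * cnj ((B k *v ?x \<omega>) $ i)))"
    by (simp only: sum.distrib)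
  also have "\<dots> = (\<Sum>i\<in>UNIV. integral\<^sup>L M (\<lambda>\<omega>. (A *v ?x \<omega>) $ i * cnj ((A *v ?x \<omega>) $ i)))
       + (\<Sum>k\<in>{1..m}. \<Sum>i\<in>UNIV. integral\<^sup>L M (\<lambda>\<omega>. (B k *v ?x \<omega>) $ i * cnj ((B k *v ?x \<omega>) $ i)))"
    by (rule arg_cong2[where f="(+)"], rule refl, rule sum.swap)
  also have "\<dots> = integral\<^sup>L M (\<lambda>\<omega>. complex_of_real (Qf A B m (?x \<omega>)))"
  proof -
    have i1: "integrable M (\<lambda>\<omega>. (A *v ?x \<omega>) $ i * cnj ((A *v ?x \<omega>) $ i))" for i
      by (rule bilin(1)[OF IH])
    have i2: "integrable M (\<lambda>\<omega>. (B k *v ?x \<omega>) $ i * cnj ((B k *v ?x \<omega>) $ i))" for k i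
      by (rule bilin(1)[OF IH])
    have s1: "integrable M (\<lambda>\<omega>. \<Sum>i\<in>UNIV. (A *v ?x \<omega>) $ i * cnj ((A *v ?x \<omega>) $ i))"
      by (rule Bochner_Integration.integrable_sum) (rule i1)
    have s2: "integrable M (\<lambda>\<omega>. \<Sum>k\<in>{1..m}. \<Sum>i\<in>UNIV. (B k *v ?x \<omega>) $ i * cnj ((B k *v ?x \<omega>) $ i))"
      by (rule Bochner_Integration.integrable_sum, rule Bochner_Integration.integrable_sum) (rule i2)
    have eQ: "integral\<^sup>L M (\<lambda>\<omega>. complex_of_real (Qf A B m (?x \<omega>)))
      = integral\<^sup>L M (\<lambda>\<omega>. \<Sum>i\<in>UNIV. (A *v ?x \<omega>) $ i * cnj ((A *v ?x \<omega>) $ i))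
        + integral\<^sup>L M (\<lambda>\<omega>. \<Sum>k\<in>{1..m}. \<Sum>i\<in>UNIV. (B k *v ?x \<omega>) $ i * cnj ((B k *v ?x \<omega>) $ i))"
      unfolding qe by (rule Bochner_Integration.integral_add[OF s1 s2])
    have eA: "integral\<^sup>L M (\<lambda>\<omega>. \<Sum>i\<in>UNIV. (A *v ?x \<omega>) $ i * cnj ((A *v ?x \<omega>) $ i))
       = (\<Sum>i\<in>UNIV. integral\<^sup>L M (\<lambda>\<omega>. (A *v ?x \<omega>) $ i * cnj ((A *v ?x \<omega>) $ i)))"
      by (rule Bochner_Integration.integral_sum) (rule i1)
    have eB1: "integral\<^sup>L M (\<lambda>\<omega>. \<Sum>k\<in>{1..m}. \<Sum>i\<in>UNIV. (B k *v ?x \<omega>) $ i * cnj ((B k *v ?x \<omega>) $ i))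
       = (\<Sum>k\<in>{1..m}. integral\<^sup>L M (\<lambda>\<omega>. \<Sum>i\<in>UNIV. (B k *v ?x \<omega>) $ i * cnj ((B k *v ?x \<omega>) $ i)))"
      by (rule Bochner_Integration.integral_sum, rule Bochner_Integration.integrable_sum) (rule i2)
    have eB2: "(\<Sum>k\<in>{1..m}. integral\<^sup>L M (\<lambda>\<omega>. \<Sum>i\<in>UNIV. (B k *v ?x \<omega>) $ i * cnj ((B k *v ?x \<omega>) $ i)))
      = (\<Sum>k\<in>{1..m}. \<Sum>i\<in>UNIV. integral\<^sup>L M (\<lambda>\<omega>. (B k *v ?x \<omega>) $ i * cnj ((B k *v ?x \<omega>) $ i)))"
      by (rule sum.cong[OF refl], rule Bochner_Integration.integral_sum) (rule i2)
    show ?thesis by (simp only: eQ eA eB1 eB2)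
  qed
  finally have calc: "integral\<^sup>L M (\<lambda>\<omega>. complex_of_real ((norm (traj A B m \<xi> u (Suc n) \<omega>))\<^sup>2))
      = integral\<^sup>L M (\<lambda>\<omega>. complex_of_real (Qf A B m (?x \<omega>)))" .
  show "integral\<^sup>L M (\<lambda>\<omega>. (norm (traj A B m \<xi> u (Suc n) \<omega>))\<^sup>2) = integral\<^sup>L M (\<lambda>\<omega>. Qf A B m (traj A B m \<xi> u n \<omega>))"
    by (simp only: re_int(2)[OF cn] re_int(2)[OF iq] calc)
qed

end

theorem proposition2p1:
  fixes M :: "'a measure"
    and A :: "complex^'d^'d" and B :: "nat \<Rightarrow> complex^'d^'d" and m :: nat
    and \<xi> :: "nat \<Rightarrow> nat \<Rightarrow> 'a \<Rightarrow> real"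
    and u v :: "complex^'d"
  assumes "prob_space M"
    and "prob_space.indep_vars M (\<lambda>_. borel) (\<lambda>(n, k). \<xi> n k) ({1..} \<times> {1..m})"
    and "\<And>n k. n \<ge> 1 \<Longrightarrow> k \<in> {1..m} \<Longrightarrow> \<xi> n k \<in> borel_measurable M"
    and "\<And>n k. n \<ge> 1 \<Longrightarrow> k \<in> {1..m} \<Longrightarrow> integrable M (\<lambda>\<omega>. (\<xi> n k \<omega>)\<^sup>2)"
    and "\<And>n k. n \<ge> 1 \<Longrightarrow> k \<in> {1..m} \<Longrightarrow> integral\<^sup>L M (\<xi> n k) = 0"
    and "\<And>n k. n \<ge> 1 \<Longrightarrow> k \<in> {1..m} \<Longrightarrow> integral\<^sup>L M (\<lambda>\<omega>. (\<xi> n k \<omega>)\<^sup>2) = 1"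
  shows "(\<forall>n. cvec (covmat M (traj A B m \<xi> u n) (traj A B m \<xi> v n))
            = (((*v) (kron (cmat_conj A) A + (\<Sum>k\<in>{1..m}. kron (cmat_conj (B k)) (B k)))) ^^ n)
                (cvec (covmat M (traj A B m \<xi> u 0) (traj A B m \<xi> v 0))))
         \<and> (\<forall>n. let N = cmat_adj A ** A + (\<Sum>k\<in>{1..m}. cmat_adj (B k) ** B k);
                 \<gamma> = Min (real_eigenvalues N); \<beta> = Max (real_eigenvalues N);
                 r = integral\<^sup>L M (\<lambda>\<omega>. (norm (traj A B m \<xi> u n \<omega>))\<^sup>2)
             in (norm u)\<^sup>2 * \<gamma> ^ n \<le> r \<and> r \<le> (norm u)\<^sup>2 * \<beta> ^ n)"
proof -
  interpret S: setting M m \<xi>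
    using assms by (simp add: setting_def setting_axioms_def)
  have part1: "cvec (covmat M (traj A B m \<xi> u n) (traj A B m \<xi> v n))
            = (((*v) (kron (cmat_conj A) A + (\<Sum>k\<in>{1..m}. kron (cmat_conj (B k)) (B k)))) ^^ n)
                (cvec (covmat M (traj A B m \<xi> u 0) (traj A B m \<xi> v 0)))" for n
  proof (induction n)
    case 0 show ?case by simp
  next
    case (Suc n) show ?case by (simp only: funpow.simps(2) o_apply S.cov_step Suc.IH[symmetric])
  qed
  define E where "E = real_eigenvalues (Nm A B m)"
  have EN: "real_eigenvalues (cmat_adj A ** A + (\<Sum>k\<in>{1..m}. cmat_adj (B k) ** B k)) = E"
    unfolding E_def Nm_def ..
  note eb = eig_bounds[of A B m, folded E_def]
  have g0: "0 \<le> Min E" by (rule eb(3))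
  have b0: "0 \<le> Max E"
  proof -
    have "Min E \<in> E" using eb(1,2) by simp
    hence "Min E \<le> Max E" using eb(1) by simp
    thus ?thesis using g0 by simp
  qed
  define r where "r n = integral\<^sup>L M (\<lambda>\<omega>. (norm (traj A B m \<xi> u n \<omega>))\<^sup>2)" for n
  have r0: "r 0 = (norm u)\<^sup>2" unfolding r_def by (simp add: S.prob_space)
  have rlo: "Min E * r n \<le> r (Suc n)" for n
  proof -
    have "Min E * r n = integral\<^sup>L M (\<lambda>\<omega>. Min E * (norm (traj A B m \<xi> u n \<omega>))\<^sup>2)"
      unfolding r_def by simp
    also have "\<dots> \<le> integral\<^sup>L M (\<lambda>\<omega>. Qf A B m (traj A B m \<xi> u n \<omega>))"
      by (rule integral_mono) (use S.r_step(1,2) eb(4) in auto)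
    also have "\<dots> = r (Suc n)" unfolding r_def by (rule S.r_step(3)[symmetric])
    finally show ?thesis .
  qed
  have rhi: "r (Suc n) \<le> Max E * r n" for n
  proof -
    have "r (Suc n) = integral\<^sup>L M (\<lambda>\<omega>. Qf A B m (traj A B m \<xi> u n \<omega>))" unfolding r_def by (rule S.r_step(3))
    also have "\<dots> \<le> integral\<^sup>L M (\<lambda>\<omega>. Max E * (norm (traj A B m \<xi> u n \<omega>))\<^sup>2)"
      by (rule integral_mono) (use S.r_step(1,2) eb(5) in auto)
    also have "\<dots> = Max E * r n" unfolding r_def by simp
    finally show ?thesis .
  qed
  have part2: "(norm u)\<^sup>2 * Min E ^ n \<le> r n \<and> r n \<le> (norm u)\<^sup>2 * Max E ^ n" for n
  proof (induction n)
    case 0 show ?case using r0 by simp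
  next
    case (Suc n)
    have "(norm u)\<^sup>2 * Min E ^ Suc n = Min E * ((norm u)\<^sup>2 * Min E ^ n)" by (simp add: mult_ac)
    also have "\<dots> \<le> Min E * r n" using Suc.IH g0 by (simp add: mult_left_mono)
    also have "\<dots> \<le> r (Suc n)" by (rule rlo)
    finally have 1: "(norm u)\<^sup>2 * Min E ^ Suc n \<le> r (Suc n)" .
    have "r (Suc n) \<le> Max E * r n" by (rule rhi)
    also have "\<dots> \<le> Max E * ((norm u)\<^sup>2 * Max E ^ n)" using Suc.IH b0 by (simp add: mult_left_mono)
    also have "\<dots> = (norm u)\<^sup>2 * Max E ^ Suc n" by (simp add: mult_ac)
    finally show ?case using 1 by simp
  qed
  show ?thesis
    using part1 part2 unfolding Let_def EN r_def by blast
qed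

end
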